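(* Let $J:=\operatorname{conv}\{\mathbf{v}_0,\mathbf{v}_1,\dots,\mathbf{v}_d\}\subset\mathbb{R}^d_{\ge0}\setminus\{\mathbf{0}\}$ be a $d$-simplex and let $f$ be $q$-homogeneous ($q\ge1$) and convex on $\operatorname{conv}(J\cup\{\mathbf{0}\})$. Then $$\operatorname{vol}(P^0(f,J))-\operatorname{vol}(P(f,J))=\frac{q-1}{(q+d+1)(d+2)}\int_J f(\mathbf{x})\,d\mathbf{x}.$$
   Context: $f$ is $q$-homogeneous if $f(\lambda\mathbf{x})=\lambda^q f(\mathbf{x})$ for all $\lambda\ge0$ (in particular $f(\mathbf{0})=0$). Let $\mu$ be the unique affine function agreeing with $f$ at the vertices of $J$ and $\mu(\mathbf{x},z):=z\mu(\mathbf{x}/z)$ (extended linearly in $(\mathbf{x},z)$). For $z\ge0$, $z\cdot J:=\{z\mathbf{x}:\mathbf{x}\in J\}$. Perspective relaxation: $P(f,J):=\operatorname{cl}\{(\mathbf{x},y,z):\mu(\mathbf{x},z)\ge y\ge zf(\mathbf{x}/z),\ \mathbf{x}\in z\cdot J,\ 1\ge z>0\}$. Naive relaxation: $P^0(f,J):=\{(\mathbf{x},y,z):\mu(\mathbf{x},z)\ge y\ge f(\mathbf{x}),\ \mathbf{x}\in z\cdot J,\ 1\ge z\ge0\}$, both in $\mathbb{R}^d\times\mathbb{R}\times\mathbb{R}$. $\operatorname{vol}$ is $(d+2)$-dimensional Lebesgue measure. *)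

theory Defs
  imports "HOL-Analysis.Analysis"
begin

text \<open>The affine interpolant mu(x) = a \<bullet> x + c of f at the vertices of J is given by
  its coefficients a, c; its homogenisation is mu(x,z) = a \<bullet> x + c * z.\<close>

definition q_homogeneous :: "real \<Rightarrow> ('a::real_vector \<Rightarrow> real) \<Rightarrow> bool" where
  "q_homogeneous q f \<longleftrightarrow> (\<forall>t x. t \<ge> 0 \<longrightarrow> f (t *\<^sub>R x) = t powr q * f x)"

definition persp_relax ::
  "('a::euclidean_space \<Rightarrow> real) \<Rightarrow> 'a set \<Rightarrow> 'a \<Rightarrow> real \<Rightarrow> ('a \<times> real \<times> real) set" where
  "persp_relax f J a c = closure {(x, y, z). a \<bullet> x + c * z \<ge> y \<and> y \<ge> z * f (x /\<^sub>R z)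
      \<and> x \<in> (\<lambda>u. z *\<^sub>R u) ` J \<and> 0 < z \<and> z \<le> 1}"

definition naive_relax ::
  "('a::euclidean_space \<Rightarrow> real) \<Rightarrow> 'a set \<Rightarrow> 'a \<Rightarrow> real \<Rightarrow> ('a \<times> real \<times> real) set" where
  "naive_relax f J a c = {(x, y, z). a \<bullet> x + c * z \<ge> y \<and> y \<ge> f x
      \<and> x \<in> (\<lambda>u. z *\<^sub>R u) ` J \<and> 0 \<le> z \<and> z \<le> 1}"

end

theory Submission
  imports Defs
begin

lemma nn_integral_scale_euclid:
  fixes h :: "'a::euclidean_space \<Rightarrow> ennreal"
  assumes [measurable]: "h \<in> borel_measurable borel" and c: "c \<noteq> 0"
  shows "(\<integral>\<^sup>+x. h x \<partial>lborel) = ennreal (\<bar>c\<bar> ^ DIM('a)) * (\<integral>\<^sup>+x. h (c *\<^sub>R x) \<partial>lborel)"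
  by (subst lborel_affine[OF c, of 0]) (simp add: nn_integral_density nn_integral_distr nn_integral_cmult)

lemma measure_symdiff_sets:
  assumes S: "S \<in> sets lebesgue" and n: "negligible (S - T \<union> (T - S))"
  shows "measure lebesgue T = measure lebesgue S"
proof -
  have n1: "S - T \<in> null_sets lebesgue" "T - S \<in> null_sets lebesgue"
    using n negligible_Un_eq negligible_iff_null_sets by blast+
  have T: "T \<in> sets lebesgue" using sets_negligible_symdiff[OF S n] .
  have "emeasure lebesgue (S - (S - T)) = emeasure lebesgue S"
    by (rule emeasure_Diff_null_set[OF n1(1) S])
  moreover have "emeasure lebesgue (T - (T - S)) = emeasure lebesgue T"
    by (rule emeasure_Diff_null_set[OF n1(2) T])
  moreover have "S - (S - T) = T - (T - S)" by blast
  ultimately show ?thesis by (simp add: measure_def)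
qed

lemma negligible_Times_UNIV:
  fixes A :: "'a::euclidean_space set"
  assumes "negligible A" "A \<in> sets borel"
  shows "negligible (A \<times> (UNIV :: 'b::euclidean_space set))"
proof -
  have "A \<in> null_sets lborel"
    using assms by (metis lebesgue_on_UNIV_eq negligible_iff_null_sets null_sets_completion_iff sets_lborel) 
  then have "emeasure lborel A = 0" by auto
  then have "emeasure (lborel \<Otimes>\<^sub>M lborel) (A \<times> (UNIV :: 'b set)) = 0"
    using assms by (simp add: lborel.emeasure_pair_measure_Times)
  then have "A \<times> (UNIV :: 'b set) \<in> null_sets lborel"
    using assms by (simp add: lborel_prod null_setsI borel_prod[symmetric])
  then show ?thesis
    by (simp add: negligible_iff_null_sets null_sets_completionI)
qed


lemma power_integral:
  fixes q :: real and d :: nat assumes q: "q \<ge> 1"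
  shows "((\<lambda>z. z^d * (z - z powr q)) has_integral (1/(d+2) - 1/(q+d+1))) {0<..<1}"
proof -
  define \<Phi> where "\<Phi> z = z^(d+2)/(d+2) - z powr (q+d+1)/(q+d+1)" for z :: real
  have cont: "continuous_on {0..1} \<Phi>"
    unfolding \<Phi>_def using q
    by (intro continuous_intros continuous_on_powr') auto
  have der: "(\<Phi> has_vector_derivative (z^d * (z - z powr q))) (at z)" if "z \<in> {0<..<1}" for z
  proof -
    have z: "z > 0" using that by auto
    have d1: "((\<lambda>z. z^(d+2)) has_real_derivative real (d+2) * z^(d+1)) (at z)"
      using DERIV_pow[of "d+2" z] by simp
    have d2: "((\<lambda>z. z powr (q+d+1)) has_real_derivative (q+d+1) * z powr (q+d+1-1)) (at z)"
      using z by (rule has_real_derivative_powr)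
    have "(\<Phi> has_real_derivative (real (d+2) * z^(d+1) / (d+2) - (q+d+1) * z powr (q+d+1-1) / (q+d+1))) (at z)"
      unfolding \<Phi>_def[abs_def] by (intro DERIV_diff DERIV_cdivide d1 d2)
    moreover have "real (d+2) * z^(d+1) / (d+2) - (q+d+1) * z powr (q+d+1-1) / (q+d+1) = z^d * (z - z powr q)"
    proof -
      have "z powr (q+d+1-1) = z powr q * z^d"
        using z by (simp add: powr_add powr_realpow)
      moreover have "(q + d + 1) * z powr (q+d+1-1) / (q+d+1) = z powr (q+d+1-1)"
        using q by (intro nonzero_mult_div_cancel_left) simp
      moreover have "real (d+2) * z^(d+1) / (d+2) = z^d * z"
        by simp
      ultimately show ?thesis by (simp add: algebra_simps)
    qed
    ultimately show ?thesis by (simp add: has_real_derivative_iff_has_vector_derivative)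
  qed
  have "((\<lambda>z. z^d * (z - z powr q)) has_integral (\<Phi> 1 - \<Phi> 0)) {0..1}"
    by (rule fundamental_theorem_of_calculus_interior[OF _ cont der]) auto
  moreover have "\<Phi> 1 - \<Phi> 0 = 1/(d+2) - 1/(q+d+1)"
    unfolding \<Phi>_def using q by simp
  ultimately show ?thesis
    using has_integral_open_interval[of _ _ 0 "1::real"] by (metis box_real(1) cbox_interval)
qed
lemma D_emeasure:
  fixes F :: "real^'n \<Rightarrow> real" and J0 :: "(real^'n) set" and q I :: real
  assumes Fm[measurable]: "F \<in> borel_measurable borel" and oJ0: "open J0" and q: "q \<ge> 1"
    and hom: "\<And>z u. 0 < z \<Longrightarrow> z < 1 \<Longrightarrow> u \<in> J0 \<Longrightarrow> F (z *\<^sub>R u) = z powr q * F u"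
    and Fpos: "\<And>u. u \<in> J0 \<Longrightarrow> 0 \<le> F u"
    and I: "(F has_integral I) J0"
    and phi: "((\<lambda>z. z^CARD('n) * (z - z powr q)) has_integral r) {0<..<1}"
  shows "emeasure lborel {p. 0< snd (snd p) \<and> snd (snd p)<1 \<and> fst p /\<^sub>R snd (snd p) \<in> J0 \<and> F (fst p) \<le> fst (snd p) \<and> \<not> (snd (snd p) * F (fst p /\<^sub>R snd (snd p)) \<le> fst (snd p))}
     = ennreal (I * r)"
proof -
  define D where "D = {p. 0< snd (snd p) \<and> snd (snd p)<1 \<and> fst p /\<^sub>R snd (snd p) \<in> J0 \<and> F (fst p) \<le> fst (snd p) \<and> \<not> (snd (snd p) * F (fst p /\<^sub>R snd (snd p)) \<le> fst (snd p))}"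
  define W where "W = {p. 0< snd p \<and> snd p<1 \<and> fst p /\<^sub>R snd p \<in> J0}"
  define H where "H x z = indicator W (x,z) * ennreal (z * F (x /\<^sub>R z) - F x)" for x z
  have [measurable]: "J0 \<in> sets borel" using oJ0 by simp
  have Dp: "Measurable.pred (lborel \<Otimes>\<^sub>M (lborel \<Otimes>\<^sub>M lborel) :: ((real^'n) \<times> real \<times> real) measure)
     (\<lambda>p. 0< snd (snd p) \<and> snd (snd p)<1 \<and> fst p /\<^sub>R snd (snd p) \<in> J0 \<and> F (fst p) \<le> fst (snd p) \<and> \<not> (snd (snd p) * F (fst p /\<^sub>R snd (snd p)) \<le> fst (snd p)))"
    by measurable
  have Dm: "D \<in> sets (lborel \<Otimes>\<^sub>M (lborel \<Otimes>\<^sub>M lborel))"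
  proof -
    have "D = {p \<in> space (lborel \<Otimes>\<^sub>M (lborel \<Otimes>\<^sub>M lborel)). 0< snd (snd p) \<and> snd (snd p)<1 \<and> fst p /\<^sub>R snd (snd p) \<in> J0 \<and> F (fst p) \<le> fst (snd p) \<and> \<not> (snd (snd p) * F (fst p /\<^sub>R snd (snd p)) \<le> fst (snd p))}"
      unfolding D_def by (simp add: space_pair_measure)
    then show ?thesis using Dp by (simp only: pred_def)
  qed
  have Hm: "(\<lambda>p. H (fst p) (snd p)) \<in> borel_measurable (lborel \<Otimes>\<^sub>M lborel)"
  proof -
    have "Measurable.pred (lborel \<Otimes>\<^sub>M lborel :: ((real^'n) \<times> real) measure) (\<lambda>p. 0< snd p \<and> snd p<1 \<and> fst p /\<^sub>R snd p \<in> J0)"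
      by measurable
    then have "W \<in> sets (lborel \<Otimes>\<^sub>M lborel)"
      unfolding W_def pred_def by (simp add: space_pair_measure)
    then show ?thesis unfolding H_def by measurable
  qed
  have Dm': "D \<in> sets (lborel \<Otimes>\<^sub>M (lborel :: (real \<times> real) measure))"
    using Dm by (simp only: lborel_prod)
  have "emeasure lborel D = emeasure (lborel \<Otimes>\<^sub>M (lborel :: (real \<times> real) measure)) D"
    by (simp only: lborel_prod)
  also have "\<dots> = (\<integral>\<^sup>+x. \<integral>\<^sup>+w. indicator D (x,w) \<partial>(lborel :: (real \<times> real) measure) \<partial>lborel)"
    using Dm' by (rule lborel.emeasure_pair_measure)
  also have "\<dots> = (\<integral>\<^sup>+x. \<integral>\<^sup>+w. indicator D (x,w) \<partial>(lborel \<Otimes>\<^sub>M lborel) \<partial>lborel)"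
    by (simp only: lborel_prod)
  also have "\<dots> = (\<integral>\<^sup>+x. \<integral>\<^sup>+z. \<integral>\<^sup>+y. indicator D (x,(y,z)) \<partial>lborel \<partial>lborel \<partial>lborel)"
  proof (intro nn_integral_cong)
    fix x :: "real^'n"
    have [measurable]: "D \<in> sets (lborel \<Otimes>\<^sub>M (lborel \<Otimes>\<^sub>M lborel))" by (rule Dm)
    have "(\<lambda>w. indicator D (x,w) :: ennreal) \<in> borel_measurable (lborel \<Otimes>\<^sub>M lborel)"
      by measurable
    then show "(\<integral>\<^sup>+w. indicator D (x,w) \<partial>(lborel \<Otimes>\<^sub>M lborel)) = (\<integral>\<^sup>+z. \<integral>\<^sup>+y. indicator D (x,(y,z)) \<partial>lborel \<partial>lborel)"
      by (subst lborel_pair.nn_integral_snd[symmetric]) simp_all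
  qed
  also have "\<dots> = (\<integral>\<^sup>+x. \<integral>\<^sup>+z. H x z \<partial>lborel \<partial>lborel)"
  proof (intro nn_integral_cong)
    fix x :: "real^'n" and z :: real
    show "(\<integral>\<^sup>+y. indicator D (x,(y,z)) \<partial>lborel) = H x z"
    proof (cases "(x,z) \<in> W")
      case True
      then have z: "0 < z" "z < 1" and u: "x /\<^sub>R z \<in> J0" by (auto simp: W_def)
      have xe: "x = z *\<^sub>R (x /\<^sub>R z)" using z by simp
      have "F x = z powr q * F (x /\<^sub>R z)" using hom[OF z u] xe by metis
      also have "\<dots> \<le> z * F (x /\<^sub>R z)"
        using powr_le_one_le[of z q] z q Fpos[OF u] by (intro mult_right_mono) auto
      finally have le: "F x \<le> z * F (x /\<^sub>R z)" .
      have "(\<lambda>y. indicator D (x,(y,z)) :: ennreal) = (\<lambda>y. 1 * indicator {F x ..< z * F (x /\<^sub>R z)} y)"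
        using z u by (auto simp: D_def indicator_def not_le)
      then have "(\<integral>\<^sup>+y. indicator D (x,(y,z)) \<partial>lborel) = emeasure lborel {F x ..< z * F (x /\<^sub>R z)}"
        by (simp add: nn_integral_cmult_indicator)
      also have "\<dots> = H x z" using le True by (simp add: H_def)
      finally show ?thesis .
    next
      case False
      then have "(\<lambda>y. indicator D (x,(y,z)) :: ennreal) = (\<lambda>y. 0)"
        by (auto simp: D_def W_def indicator_def)
      then show ?thesis using False by (simp add: H_def)
    qed
  qed
  also have "\<dots> = (\<integral>\<^sup>+z. \<integral>\<^sup>+x. H x z \<partial>lborel \<partial>lborel)"
    using Hm by (subst lborel_pair.Fubini') (simp_all add: case_prod_beta')
  also have "\<dots> = (\<integral>\<^sup>+z. ennreal (I * (z^CARD('n) * (z - z powr q))) * indicator {0<..<1} z \<partial>lborel)"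
  proof (intro nn_integral_cong)
    fix z :: real
    show "(\<integral>\<^sup>+x. H x z \<partial>lborel) = ennreal (I * (z^CARD('n) * (z - z powr q))) * indicator {0<..<1} z"
    proof (cases "0 < z \<and> z < 1")
      case True
      then have z: "0 < z" "z < 1" by auto
      have hm: "(\<lambda>x. H x z) \<in> borel_measurable borel"
      proof -
        have "(\<lambda>x. (\<lambda>p. H (fst p) (snd p)) (x, z)) \<in> borel_measurable lborel"
          using measurable_comp[OF measurable_Pair2'[of z lborel lborel] Hm] by (simp add: o_def)
        then show ?thesis by simp
      qed
      have I0: "0 \<le> I" using has_integral_nonneg[OF I] Fpos by blast
      have zq: "0 \<le> z - z powr q" using powr_le_one_le[of z q] z q by simp
      have "(\<integral>\<^sup>+x. H x z \<partial>lborel) = ennreal (\<bar>z\<bar> ^ DIM(real^'n)) * (\<integral>\<^sup>+u. H (z *\<^sub>R u) z \<partial>lborel)"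
        using z by (intro nn_integral_scale_euclid hm) auto
      also have "(\<lambda>u. H (z *\<^sub>R u) z) = (\<lambda>u. ennreal (z - z powr q) * (ennreal (F u) * indicator J0 u))"
      proof
        fix u
        show "H (z *\<^sub>R u) z = ennreal (z - z powr q) * (ennreal (F u) * indicator J0 u)"
        proof (cases "u \<in> J0")
          case True
          then have "H (z *\<^sub>R u) z = ennreal ((z - z powr q) * F u)"
            using z hom[OF z True] by (simp add: H_def W_def algebra_simps)
          then show ?thesis using True zq Fpos[OF True] by (simp add: ennreal_mult)
        next
          case False
          then show ?thesis using z by (simp add: H_def W_def)
        qed
      qed
      also have "(\<integral>\<^sup>+u. ennreal (z - z powr q) * (ennreal (F u) * indicator J0 u) \<partial>lborel) = ennreal (z - z powr q) * ennreal I"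
        by (subst nn_integral_cmult) (auto simp: nn_integral_has_integral_lebesgue'[OF Fpos I])
      finally show ?thesis using z zq I0 by (simp add: ennreal_mult[symmetric] mult_ac)
    next
      case False
      then have "H x z = 0" for x by (auto simp: H_def W_def)
      then show ?thesis using False by simp
    qed
  qed
  also have "\<dots> = ennreal (I * r)"
  proof (rule nn_integral_has_integral_lebesgue')
    show "((\<lambda>z. I * (z ^ CARD('n) * (z - z powr q))) has_integral I * r) {0<..<1}"
      using has_integral_mult_right[OF phi] by simp
    fix z :: real assume "z \<in> {0<..<1}"
    then show "0 \<le> I * (z ^ CARD('n) * (z - z powr q))"
      using powr_le_one_le[of z q] q has_integral_nonneg[OF I] Fpos by (auto intro!: mult_nonneg_nonneg)
  qed
  finally show ?thesis unfolding D_def .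
qed

lemma negl_z0:
  fixes J :: "(real^'n) set" and f :: "real^'n \<Rightarrow> real"
  shows "negligible {p::(real^'n)\<times>real\<times>real. snd (snd p) = 0}"
proof -
  have "{p::(real^'n)\<times>real\<times>real. snd (snd p) = 0} = {p. (0, 0, 1) \<bullet> p = 0}"
    by (auto simp: inner_prod_def)
  moreover have "((0, 0, 1) :: (real^'n)\<times>real\<times>real) \<noteq> 0" by (simp add: zero_prod_def)
  ultimately show ?thesis using negligible_hyperplane[of "(0, 0, 1) :: (real^'n)\<times>real\<times>real" 0] by simp
qed

lemma diff_Phi:
  fixes S :: "((real^'n)\<times>real\<times>real) set"
  shows "(\<lambda>p. (snd (snd p) *\<^sub>R fst p, snd p)) differentiable_on S"
proof -
  have "((\<lambda>p. (snd (snd p) *\<^sub>R fst p, snd p)) has_derivative (\<lambda>h. (snd (snd p) *\<^sub>R fst h + snd (snd h) *\<^sub>R fst p, snd h))) (at p within S)" for p :: "(real^'n)\<times>real\<times>real"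
    by (auto intro!: derivative_eq_intros)
  then show ?thesis unfolding differentiable_on_def differentiable_def by blast
qed

lemma isCont_G:
  fixes h :: "(real^'n)\<times>real\<times>real \<Rightarrow> real" and f :: "real^'n \<Rightarrow> real"
  assumes "isCont f (fst p /\<^sub>R snd (snd p))" "snd (snd p) \<noteq> 0"
  shows "isCont (\<lambda>p. snd (snd p) * f (fst p /\<^sub>R snd (snd p)) - fst (snd p)) p"
proof -
  have "isCont (\<lambda>p. fst p /\<^sub>R snd (snd p)) p" using assms(2) by (intro continuous_intros) auto
  then have "isCont (\<lambda>p. f (fst p /\<^sub>R snd (snd p))) p" using assms(1) by (rule isCont_o2)
  then show ?thesis by (intro continuous_intros)
qed
theorem theorem10:
  fixes V :: "(real^'n) set" and f :: "real^'n \<Rightarrow> real" and q c :: real and a :: "real^'n"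
  assumes "finite V" and "card V = CARD('n) + 1" and "\<not> affine_dependent V"
    and "\<forall>x\<in>convex hull V. (\<forall>i. 0 \<le> x $ i) \<and> x \<noteq> 0"
    and "q \<ge> 1" and "q_homogeneous q f"
    and "convex_on (convex hull (insert 0 (convex hull V))) f"
    and "\<forall>v\<in>V. f v = a \<bullet> v + c"
  shows "measure lebesgue (naive_relax f (convex hull V) a c)
           - measure lebesgue (persp_relax f (convex hull V) a c)
         = (q - 1) / ((q + real CARD('n) + 1) * (real CARD('n) + 2))
           * integral (convex hull V) f"
proof -
  define J where "J = convex hull V"
  define J0 where "J0 = interior J"
  define K where "K = convex hull (insert 0 J)"
  have hom: "\<And>t x. t \<ge> 0 \<Longrightarrow> f (t *\<^sub>R x) = t powr q * f x"
    using assms(6) unfolding q_homogeneous_def by blast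
  have f0: "f 0 = 0" using hom[of 0 0] by simp
  have compJ: "compact J" unfolding J_def using assms(1) by (simp add: compact_convex_hull finite_imp_compact)
  have convJ: "convex J" unfolding J_def by simp
  have closedJ: "closed J" using compJ compact_imp_closed by blast
  have bddJ: "bounded J" using compJ compact_imp_bounded by blast
  have openJ0: "open J0" unfolding J0_def by simp
  have J0J: "J0 \<subseteq> J" unfolding J0_def by (rule interior_subset)
  have frJ: "frontier J = J - J0" unfolding J0_def frontier_def using closedJ closure_closed by blast
  have negfr: "negligible (frontier J)" using convJ negligible_convex_frontier by blast
  have JK: "J \<subseteq> K" unfolding K_def by (meson hull_subset subset_insertI subset_trans)
  have zeroK: "0 \<in> K" unfolding K_def by (simp add: hull_inc)
  have convK: "convex K" unfolding K_def by simp
  have scaleK: "z *\<^sub>R u \<in> K" if "0 \<le> z" "z \<le> 1" "u \<in> J" for z u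
  proof -
    have "(1 - z) *\<^sub>R 0 + z *\<^sub>R u \<in> K"
      using convexD[OF convK zeroK, of u "1 - z" z] that JK by auto
    then show ?thesis by simp
  qed
  have J0K: "z *\<^sub>R u \<in> interior K" if "0 < z" "z \<le> 1" "u \<in> J0" for z u
  proof -
    have "open ((\<lambda>x. z *\<^sub>R x) ` J0)" using openJ0 that(1) by (intro open_scaling) auto
    moreover have "(\<lambda>x. z *\<^sub>R x) ` J0 \<subseteq> K" using scaleK that J0J by auto
    ultimately have "(\<lambda>x. z *\<^sub>R x) ` J0 \<subseteq> interior K" using interior_maximal by blast
    then show ?thesis using that by auto
  qed
  have contf: "continuous_on (interior K) f"
    apply (rule convex_on_continuous) apply simp
    using assms(7) unfolding K_def J_def by (rule convex_on_subset) (use interior_subset in auto)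
  have fmu: "f u \<le> a \<bullet> u + c" if "u \<in> J" for u
  proof -
    have "convex_on J (\<lambda>x. f x - (a \<bullet> x + c))"
    proof -
      have "convex_on J f" using assms(7) unfolding J_def by (rule convex_on_subset) (auto intro: hull_subset[THEN subsetD])
      moreover have "convex_on J (\<lambda>x. - (a \<bullet> x + c))"
        using convJ unfolding convex_on_def by (auto simp: algebra_simps) (metis distrib_right mult_1 order_refl)
      ultimately show ?thesis using convex_on_add[of J f "\<lambda>x. - (a \<bullet> x + c)"] by (simp only: diff_conv_add_uminus)
    qed
    then have "\<forall>x\<in>convex hull V. f x - (a \<bullet> x + c) \<le> 0"
      using assms(8) unfolding J_def by (intro convex_on_convex_hull_bound) auto
    then show ?thesis using that unfolding J_def by auto
  qed
  have fpos: "0 \<le> f u" if "q > 1" "u \<in> J" for u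
  proof -
    have "f ((1/2) *\<^sub>R u) = (1/2) powr q * f u" by (rule hom) simp
    moreover have "f ((1/2) *\<^sub>R u) \<le> (1/2) * f 0 + (1/2) * f u"
    proof -
      have "f ((1 - 1/2) *\<^sub>R 0 + (1/2) *\<^sub>R u) \<le> (1 - 1/2) * f 0 + (1/2) * f u"
        using assms(7) unfolding K_def[symmetric] J_def[symmetric]
        by (rule convex_onD) (use zeroK JK that in auto)
      then show ?thesis by simp
    qed
    moreover have "(1/2::real) powr q < (1/2) powr 1"
      using that(1) by (intro powr_less_mono') auto
    ultimately have "0 \<le> (1/2 - (1/2::real) powr q) * f u" "0 < 1/2 - (1/2::real) powr q"
      using f0 by (simp_all add: algebra_simps)
    then show ?thesis by (simp add: zero_le_mult_iff)
  qed
  define d where "d = CARD('n)"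
  define F where "F = (\<lambda>x. indicator (interior K) x * f x)"
  have Fm: "F \<in> borel_measurable borel"
    unfolding F_def using borel_measurable_continuous_on_indicator[OF _ contf] by (simp only: real_scaleR_def borel_open open_interior)
  have fF: "f x = F x \<and> f (x /\<^sub>R z) = F (x /\<^sub>R z)" if "0 < z" "z < 1" "x /\<^sub>R z \<in> J0" for x z
  proof -
    have "x = z *\<^sub>R (x /\<^sub>R z)" using that by simp
    then have "x \<in> interior K" using J0K[of z "x /\<^sub>R z"] that by simp
    moreover have "x /\<^sub>R z \<in> interior K" using J0K[of 1 "x /\<^sub>R z"] that by simp
    ultimately show ?thesis by (simp add: F_def)
  qed
  define N' where "N' = {p::(real^'n)\<times>real\<times>real. 0 < snd (snd p) \<and> snd (snd p) < 1 \<and> fst p /\<^sub>R snd (snd p) \<in> J0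
      \<and> f (fst p) \<le> fst (snd p) \<and> fst (snd p) \<le> a \<bullet> fst p + c * snd (snd p)}"
  define S' where "S' = {p::(real^'n)\<times>real\<times>real. 0 < snd (snd p) \<and> snd (snd p) < 1 \<and> fst p /\<^sub>R snd (snd p) \<in> J0
      \<and> snd (snd p) * f (fst p /\<^sub>R snd (snd p)) \<le> fst (snd p) \<and> fst (snd p) \<le> a \<bullet> fst p + c * snd (snd p)}"
  define E where "E = {p::(real^'n)\<times>real\<times>real. snd (snd p) = 0} \<union> {p. snd (snd p) = 1}
      \<union> (\<lambda>p. (snd (snd p) *\<^sub>R fst p, snd p)) ` (frontier J \<times> UNIV)"
  have negE: "negligible E"
  proof -
    have n1: "negligible {p::(real^'n)\<times>real\<times>real. snd (snd p) = 0}" by (rule negl_z0)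
    have "{p::(real^'n)\<times>real\<times>real. snd (snd p) = 1} = (\<lambda>p. p + (0,0,1)) ` {p. snd (snd p) = 0}"
    proof (rule set_eqI)
      fix p :: "(real^'n)\<times>real\<times>real"
      show "p \<in> {p. snd (snd p) = 1} \<longleftrightarrow> p \<in> (\<lambda>p. p + (0,0,1)) ` {p. snd (snd p) = 0}"
        by (cases p) (auto simp: image_iff intro!: exI[of _ "p - (0,0,1)"])
    qed
    then have n2: "negligible {p::(real^'n)\<times>real\<times>real. snd (snd p) = 1}"
      using n1 negligible_translation[of _ "(0,0,1)"] by (simp add: add.commute)
    have "negligible (frontier J \<times> (UNIV :: (real\<times>real) set))"
      using negfr by (intro negligible_Times_UNIV) auto
    then have n3: "negligible ((\<lambda>p. (snd (snd p) *\<^sub>R fst p, snd p)) ` (frontier J \<times> (UNIV :: (real\<times>real) set)))"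
      by (intro negligible_differentiable_image_negligible diff_Phi) auto
    show ?thesis unfolding E_def using n1 n2 n3 by auto
  qed
  have inE: "p \<in> E" if "0 \<le> snd (snd p)" "snd (snd p) \<le> 1" "u \<in> J" "fst p = snd (snd p) *\<^sub>R u"
      "\<not> (0 < snd (snd p) \<and> snd (snd p) < 1 \<and> fst p /\<^sub>R snd (snd p) \<in> J0)" for p u
  proof -
    obtain x y z where p: "p = (x,y,z)" by (cases p) auto
    show ?thesis
    proof (cases "z = 0 \<or> z = 1")
      case True then show ?thesis by (auto simp: E_def p)
    next
      case False
      then have "x /\<^sub>R z = u" using that p by auto
      moreover have "0 < z" "z < 1" using False that p by auto
      ultimately have "u \<in> frontier J" using that p frJ by auto
      moreover have "p = (\<lambda>p. (snd (snd p) *\<^sub>R fst p, snd p)) (u, y, z)" using that p by simp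
      ultimately show ?thesis unfolding E_def by blast
    qed
  qed
  have N'sub: "N' \<subseteq> naive_relax f J a c"
  proof
    fix p assume "p \<in> N'"
    then obtain x y z where p: "p = (x,y,z)" and z: "0 < z" "z < 1" and u: "x /\<^sub>R z \<in> J0"
      and ineq: "f x \<le> y" "y \<le> a \<bullet> x + c * z"
      unfolding N'_def by (cases p) auto
    have "x = z *\<^sub>R (x /\<^sub>R z)" using z by simp
    then have "x \<in> (\<lambda>u. z *\<^sub>R u) ` J" using u J0J by blast
    then show "p \<in> naive_relax f J a c"
      unfolding naive_relax_def using p z ineq by simp
  qed
  have Nsub: "naive_relax f J a c - N' \<subseteq> E"
  proof
    fix p assume p: "p \<in> naive_relax f J a c - N'"
    then obtain u where u: "u \<in> J" "fst p = snd (snd p) *\<^sub>R u" "0 \<le> snd (snd p)" "snd (snd p) \<le> 1"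
      unfolding naive_relax_def by (cases p) auto
    show "p \<in> E"
    proof (rule inE[OF u(3,4,1,2)])
      show "\<not> (0 < snd (snd p) \<and> snd (snd p) < 1 \<and> fst p /\<^sub>R snd (snd p) \<in> J0)"
        using p unfolding naive_relax_def N'_def by (cases p) auto
    qed
  qed
  define S0 where "S0 = {(x, y, z). a \<bullet> x + c * z \<ge> y \<and> y \<ge> z * f (x /\<^sub>R z)
      \<and> x \<in> (\<lambda>u. z *\<^sub>R u) ` J \<and> 0 < z \<and> z \<le> 1}"
  have C_def: "persp_relax f J a c = closure S0" unfolding persp_relax_def S0_def ..
  have S'sub: "S' \<subseteq> persp_relax f J a c"
  proof
    fix p assume "p \<in> S'"
    then obtain x y z where p: "p = (x,y,z)" and z: "0 < z" "z < 1" and u: "x /\<^sub>R z \<in> J0"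
      and ineq: "z * f (x /\<^sub>R z) \<le> y" "y \<le> a \<bullet> x + c * z"
      unfolding S'_def by (cases p) auto
    have "x = z *\<^sub>R (x /\<^sub>R z)" using z by simp
    then have "x \<in> (\<lambda>u. z *\<^sub>R u) ` J" using u J0J by blast
    then have "p \<in> S0"
      unfolding S0_def using p z ineq by simp
    then show "p \<in> persp_relax f J a c" unfolding C_def using closure_subset by blast
  qed
  define Q where "Q = (\<lambda>w. (snd w *\<^sub>R fst w, snd w)) ` (J \<times> {0..1::real})"
  have compQ: "compact Q" unfolding Q_def
    by (intro compact_continuous_image compact_Times compJ compact_Icc continuous_intros)
  define T where "T = {p::(real^'n)\<times>real\<times>real. (fst p, snd (snd p)) \<in> Q} \<inter> {p. fst (snd p) \<le> a \<bullet> fst p + c * snd (snd p)}"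
  have closedT: "closed T"
  proof -
    have c1: "continuous_on UNIV (\<lambda>p::(real^'n)\<times>real\<times>real. (fst p, snd (snd p)))"
      by (intro continuous_intros)
    have cl1: "closed ((\<lambda>p::(real^'n)\<times>real\<times>real. (fst p, snd (snd p))) -` Q)"
      by (rule closed_vimage[OF compact_imp_closed[OF compQ] c1])
    have cl2: "closed {p::(real^'n)\<times>real\<times>real. fst (snd p) \<le> a \<bullet> fst p + c * snd (snd p)}"
      by (intro closed_Collect_le continuous_intros)
    have eq: "T = ((\<lambda>p::(real^'n)\<times>real\<times>real. (fst p, snd (snd p))) -` Q) \<inter> {p::(real^'n)\<times>real\<times>real. fst (snd p) \<le> a \<bullet> fst p + c * snd (snd p)}"
      unfolding T_def vimage_def by (rule refl)
    show ?thesis unfolding eq by (rule closed_Int[OF cl1 cl2])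
  qed
  have S0T: "S0 \<subseteq> T"
  proof
    fix p assume "p \<in> S0"
    then obtain x y z u where p: "p = (x,y,z)" and u: "u \<in> J" "x = z *\<^sub>R u" "0 < z" "z \<le> 1"
      and mu: "y \<le> a \<bullet> x + c * z"
      unfolding S0_def by auto
    have "(x, z) = (\<lambda>w. (snd w *\<^sub>R fst w, snd w)) (u, z)" using u by simp
    moreover have "(u, z) \<in> J \<times> {0..1}" using u by simp
    ultimately have "(x, z) \<in> Q" unfolding Q_def by blast
    then show "p \<in> T" unfolding T_def using p mu by simp
  qed
  have CT: "persp_relax f J a c \<subseteq> T" unfolding C_def using closure_minimal[OF S0T closedT] .
  have Csub: "persp_relax f J a c - S' \<subseteq> E"
  proof
    fix p assume p: "p \<in> persp_relax f J a c - S'"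
    then have "p \<in> T" using CT by auto
    then have pQ: "(fst p, snd (snd p)) \<in> Q" and mu: "fst (snd p) \<le> a \<bullet> fst p + c * snd (snd p)"
      unfolding T_def by auto
    then obtain w where w: "w \<in> J \<times> {0..1}" "(fst p, snd (snd p)) = (snd w *\<^sub>R fst w, snd w)"
      unfolding Q_def by blast
    then have u: "fst w \<in> J" "fst p = snd (snd p) *\<^sub>R fst w" "0 \<le> snd (snd p)" "snd (snd p) \<le> 1"
      by auto
    show "p \<in> E"
    proof (rule inE[OF u(3,4,1,2)])
      show "\<not> (0 < snd (snd p) \<and> snd (snd p) < 1 \<and> fst p /\<^sub>R snd (snd p) \<in> J0)"
      proof
        assume H: "0 < snd (snd p) \<and> snd (snd p) < 1 \<and> fst p /\<^sub>R snd (snd p) \<in> J0"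
        define h where "h = (\<lambda>p::(real^'n)\<times>real\<times>real. snd (snd p) * f (fst p /\<^sub>R snd (snd p)) - fst (snd p))"
        have "isCont f (fst p /\<^sub>R snd (snd p))"
          using contf J0K[of 1 "fst p /\<^sub>R snd (snd p)"] H
          by (simp add: continuous_on_eq_continuous_at)
        then have ch: "isCont h p" unfolding h_def using H by (intro isCont_G) auto
        have "h p > 0"
        proof (rule ccontr)
          assume "\<not> h p > 0"
          then have "p \<in> S'" using H mu unfolding h_def S'_def by auto
          then show False using p by auto
        qed
        then have "eventually (\<lambda>x. h x > 0) (nhds p)"
          using ch unfolding isCont_def by (metis order_tendstoD(1) tendsto_at_iff_tendsto_nhds)
        then obtain U where U: "open U" "p \<in> U" "\<And>x. x \<in> U \<Longrightarrow> h x > 0"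
          unfolding eventually_nhds by blast
        have "p \<in> closure S0" using p C_def by auto
        then obtain s where s: "s \<in> S0" "s \<in> U"
        proof -
          have "U \<inter> closure S0 \<noteq> {}" using U(2) \<open>p \<in> closure S0\<close> by blast
          then have "U \<inter> S0 \<noteq> {}" using open_Int_closure_eq_empty[OF U(1)] by blast
          then show ?thesis using that by blast
        qed
        then have "h s \<le> 0" unfolding S0_def h_def by auto
        then show False using U(3)[OF s(2)] by simp
      qed
    qed
  qed
  have FJ0: "F u = f u" if "u \<in> J0" for u
    using J0K[of 1 u] that by (simp add: F_def)
  have J0b[measurable]: "J0 \<in> sets borel" using openJ0 by simp
  note Fm[measurable]
  have N'm: "N' \<in> sets lborel"
  proof -
    have "Measurable.pred (lborel \<Otimes>\<^sub>M (lborel \<Otimes>\<^sub>M lborel) :: ((real^'n) \<times> real \<times> real) measure)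
     (\<lambda>p. 0 < snd (snd p) \<and> snd (snd p) < 1 \<and> fst p /\<^sub>R snd (snd p) \<in> J0
      \<and> F (fst p) \<le> fst (snd p) \<and> fst (snd p) \<le> a \<bullet> fst p + c * snd (snd p))"
      by measurable
    then have m: "{p \<in> space (lborel \<Otimes>\<^sub>M (lborel \<Otimes>\<^sub>M lborel)). 0 < snd (snd p) \<and> snd (snd p) < 1 \<and> fst p /\<^sub>R snd (snd p) \<in> J0
      \<and> F (fst p) \<le> fst (snd p) \<and> fst (snd p) \<le> a \<bullet> fst p + c * snd (snd p)} \<in> sets (lborel \<Otimes>\<^sub>M (lborel \<Otimes>\<^sub>M lborel) :: ((real^'n) \<times> real \<times> real) measure)"
      by (simp only: pred_def)
    have "N' = {p \<in> space (lborel \<Otimes>\<^sub>M (lborel \<Otimes>\<^sub>M lborel)). 0 < snd (snd p) \<and> snd (snd p) < 1 \<and> fst p /\<^sub>R snd (snd p) \<in> J0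
      \<and> F (fst p) \<le> fst (snd p) \<and> fst (snd p) \<le> a \<bullet> fst p + c * snd (snd p)}"
    proof (rule set_eqI)
      fix p :: "(real^'n)\<times>real\<times>real"
      show "p \<in> N' \<longleftrightarrow> p \<in> {p \<in> space (lborel \<Otimes>\<^sub>M (lborel \<Otimes>\<^sub>M lborel)). 0 < snd (snd p) \<and> snd (snd p) < 1 \<and> fst p /\<^sub>R snd (snd p) \<in> J0
      \<and> F (fst p) \<le> fst (snd p) \<and> fst (snd p) \<le> a \<bullet> fst p + c * snd (snd p)}"
        using fF[of "snd (snd p)" "fst p"] unfolding N'_def space_pair_measure by auto
    qed
    then show ?thesis using m by (simp only: lborel_prod)
  qed
  have S'm: "S' \<in> sets lborel"
  proof -
    have "Measurable.pred (lborel \<Otimes>\<^sub>M (lborel \<Otimes>\<^sub>M lborel) :: ((real^'n) \<times> real \<times> real) measure)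
     (\<lambda>p. 0 < snd (snd p) \<and> snd (snd p) < 1 \<and> fst p /\<^sub>R snd (snd p) \<in> J0
      \<and> snd (snd p) * F (fst p /\<^sub>R snd (snd p)) \<le> fst (snd p) \<and> fst (snd p) \<le> a \<bullet> fst p + c * snd (snd p))"
      by measurable
    then have m: "{p \<in> space (lborel \<Otimes>\<^sub>M (lborel \<Otimes>\<^sub>M lborel)). 0 < snd (snd p) \<and> snd (snd p) < 1 \<and> fst p /\<^sub>R snd (snd p) \<in> J0
      \<and> snd (snd p) * F (fst p /\<^sub>R snd (snd p)) \<le> fst (snd p) \<and> fst (snd p) \<le> a \<bullet> fst p + c * snd (snd p)} \<in> sets (lborel \<Otimes>\<^sub>M (lborel \<Otimes>\<^sub>M lborel) :: ((real^'n) \<times> real \<times> real) measure)"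
      by (simp only: pred_def)
    have "S' = {p \<in> space (lborel \<Otimes>\<^sub>M (lborel \<Otimes>\<^sub>M lborel)). 0 < snd (snd p) \<and> snd (snd p) < 1 \<and> fst p /\<^sub>R snd (snd p) \<in> J0
      \<and> snd (snd p) * F (fst p /\<^sub>R snd (snd p)) \<le> fst (snd p) \<and> fst (snd p) \<le> a \<bullet> fst p + c * snd (snd p)}"
    proof (rule set_eqI)
      fix p :: "(real^'n)\<times>real\<times>real"
      show "p \<in> S' \<longleftrightarrow> p \<in> {p \<in> space (lborel \<Otimes>\<^sub>M (lborel \<Otimes>\<^sub>M lborel)). 0 < snd (snd p) \<and> snd (snd p) < 1 \<and> fst p /\<^sub>R snd (snd p) \<in> J0
      \<and> snd (snd p) * F (fst p /\<^sub>R snd (snd p)) \<le> fst (snd p) \<and> fst (snd p) \<le> a \<bullet> fst p + c * snd (snd p)}"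
        using fF[of "snd (snd p)" "fst p"] unfolding S'_def space_pair_measure by auto
    qed
    then show ?thesis using m by (simp only: lborel_prod)
  qed
  have measN: "measure lebesgue (naive_relax f J a c) = measure lebesgue N'"
  proof (rule measure_symdiff_sets)
    show "N' \<in> sets lebesgue" using N'm by simp
    show "negligible (N' - naive_relax f J a c \<union> (naive_relax f J a c - N'))"
      using negligible_subset[OF negE] N'sub Nsub by (metis Diff_eq_empty_iff sup_bot.left_neutral)
  qed
  have measC: "measure lebesgue (persp_relax f J a c) = measure lebesgue S'"
  proof (rule measure_symdiff_sets)
    show "S' \<in> sets lebesgue" using S'm by simp
    show "negligible (S' - persp_relax f J a c \<union> (persp_relax f J a c - S'))"
      using negligible_subset[OF negE] S'sub Csub by (metis Diff_eq_empty_iff sup_bot.left_neutral)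
  qed
  have goalJ: "measure lebesgue (naive_relax f J a c) - measure lebesgue (persp_relax f J a c)
         = (q - 1) / ((q + real CARD('n) + 1) * (real CARD('n) + 2)) * integral J f"
  proof (cases "q = 1")
    case True
    have "N' = S'"
    proof (rule set_eqI)
      fix p :: "(real^'n)\<times>real\<times>real"
      have "0 < snd (snd p) \<Longrightarrow> f (fst p) = snd (snd p) * f (fst p /\<^sub>R snd (snd p))"
        using hom[of "snd (snd p)" "fst p /\<^sub>R snd (snd p)"] True by simp
      then show "p \<in> N' \<longleftrightarrow> p \<in> S'" unfolding N'_def S'_def by auto
    qed
    then show ?thesis using measN measC True by simp
  next
    case False
    then have q1: "q > 1" using assms(5) by simp
    obtain R where R: "\<And>u. u \<in> J \<Longrightarrow> norm u \<le> R" using bddJ bounded_iff by metis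
    define B where "B = norm a * R + \<bar>c\<bar>"
    have fB: "0 \<le> f u \<and> a \<bullet> u + c \<le> B" if "u \<in> J" for u
    proof
      show "0 \<le> f u" using fpos[OF q1 that] .
      have "a \<bullet> u \<le> norm a * norm u" by (rule norm_cauchy_schwarz)
      also have "\<dots> \<le> norm a * R" using R[OF that] by (simp add: mult_left_mono)
      finally show "a \<bullet> u + c \<le> B" unfolding B_def by linarith
    qed
    have Nprop: "fst p = snd (snd p) *\<^sub>R (fst p /\<^sub>R snd (snd p)) \<and> f (fst p) = snd (snd p) powr q * f (fst p /\<^sub>R snd (snd p))
        \<and> f (fst p) \<le> snd (snd p) * f (fst p /\<^sub>R snd (snd p))" if "0 < snd (snd p)" "snd (snd p) < 1" "fst p /\<^sub>R snd (snd p) \<in> J0" for p :: "(real^'n)\<times>real\<times>real"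
    proof -
      have e: "fst p = snd (snd p) *\<^sub>R (fst p /\<^sub>R snd (snd p))" using that by simp
      have h: "f (fst p) = snd (snd p) powr q * f (fst p /\<^sub>R snd (snd p))"
        using hom[of "snd (snd p)" "fst p /\<^sub>R snd (snd p)"] e that by simp
      have "snd (snd p) powr q \<le> snd (snd p)" using powr_le_one_le[of "snd (snd p)" q] that q1 by simp
      then have "snd (snd p) powr q * f (fst p /\<^sub>R snd (snd p)) \<le> snd (snd p) * f (fst p /\<^sub>R snd (snd p))"
        using fpos[OF q1] J0J that by (intro mult_right_mono) auto
      then show ?thesis using e h by simp
    qed
    have bddN': "bounded N'"
    proof -
      have "N' \<subseteq> cball 0 R \<times> ({0..B} \<times> {0..1})"
      proof
        fix p assume p: "p \<in> N'"
        obtain x y z where pe: "p = (x,y,z)" by (cases p) auto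
        have z: "0 < z" "z < 1" and u: "x /\<^sub>R z \<in> J0" and y: "f x \<le> y" "y \<le> a \<bullet> x + c * z"
          using p pe unfolding N'_def by auto
        have uJ: "x /\<^sub>R z \<in> J" using u J0J by auto
        have np: "x = z *\<^sub>R (x /\<^sub>R z)" "f x = z powr q * f (x /\<^sub>R z)"
          using Nprop[of p] p pe unfolding N'_def by auto
        have "norm x = z * norm (x /\<^sub>R z)" using z np(1) by (metis abs_of_pos norm_scaleR)
        also have "\<dots> \<le> 1 * R" using z R[OF uJ] by (intro mult_mono) auto
        finally have nx: "norm x \<le> R" by simp
        have "0 \<le> f x" using np(2) fB[OF uJ] by simp
        moreover have "a \<bullet> x + c * z \<le> B"
        proof -
          have "a \<bullet> x = z * (a \<bullet> (x /\<^sub>R z))" using np(1) by (metis inner_scaleR_right)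
          then have "a \<bullet> x + c * z = z * (a \<bullet> (x /\<^sub>R z) + c)" by (simp add: algebra_simps)
          also have "\<dots> \<le> z * B" using fB[OF uJ] z by (intro mult_left_mono) auto
          also have "\<dots> \<le> B"
          proof -
            have "0 \<le> B" using fB[OF uJ] fmu[OF uJ] by linarith
            then show ?thesis using z by (intro mult_left_le_one_le) auto
          qed
          finally show ?thesis .
        qed
        ultimately show "p \<in> cball 0 R \<times> ({0..B} \<times> {0..1})" using pe nx y z by auto
      qed
      moreover have "bounded (cball (0::real^'n) R \<times> ({0..B} \<times> {0..1::real}))"
        by (intro bounded_Times bounded_cball bounded_closed_interval)
      ultimately show ?thesis by (rule bounded_subset[rotated])
    qed
    have finN': "emeasure lborel N' \<noteq> \<infinity>" using emeasure_bounded_finite[OF bddN'] by simp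
    have S'N': "S' \<subseteq> N'"
    proof
      fix p assume p: "p \<in> S'"
      then have "f (fst p) \<le> snd (snd p) * f (fst p /\<^sub>R snd (snd p))" using Nprop[of p] unfolding S'_def by auto
      then show "p \<in> N'" using p unfolding S'_def N'_def by auto
    qed
    define Dset where "Dset = {p::(real^'n)\<times>real\<times>real. 0< snd (snd p) \<and> snd (snd p)<1 \<and> fst p /\<^sub>R snd (snd p) \<in> J0 \<and> F (fst p) \<le> fst (snd p) \<and> \<not> (snd (snd p) * F (fst p /\<^sub>R snd (snd p)) \<le> fst (snd p))}"
    have DN: "N' - S' = Dset"
    proof (rule set_eqI)
      fix p :: "(real^'n)\<times>real\<times>real"
      have "0 < snd (snd p) \<Longrightarrow> snd (snd p) < 1 \<Longrightarrow> fst p /\<^sub>R snd (snd p) \<in> J0 \<Longrightarrow>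
          snd (snd p) * f (fst p /\<^sub>R snd (snd p)) \<le> a \<bullet> fst p + c * snd (snd p)"
      proof -
        assume H: "0 < snd (snd p)" "snd (snd p) < 1" "fst p /\<^sub>R snd (snd p) \<in> J0"
        have "f (fst p /\<^sub>R snd (snd p)) \<le> a \<bullet> (fst p /\<^sub>R snd (snd p)) + c" using fmu[of "fst p /\<^sub>R snd (snd p)"] J0J H(3) by blast
        then have "snd (snd p) * f (fst p /\<^sub>R snd (snd p)) \<le> snd (snd p) * (a \<bullet> (fst p /\<^sub>R snd (snd p)) + c)"
          using H(1) by (intro mult_left_mono) auto
        also have "\<dots> = a \<bullet> fst p + c * snd (snd p)" using H(1) by (simp add: algebra_simps)
        finally show ?thesis .
      qed
      then show "p \<in> N' - S' \<longleftrightarrow> p \<in> Dset"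
        using fF[of "snd (snd p)" "fst p"] unfolding N'_def S'_def Dset_def by auto
    qed
    obtain M where M: "\<And>u. u \<in> J0 \<Longrightarrow> \<bar>F u\<bar> \<le> M"
    proof
      fix u assume u: "u \<in> J0"
      then have "0 \<le> f u" "f u \<le> B" using fB fmu J0J by force+
      then show "\<bar>F u\<bar> \<le> B" using FJ0[OF u] by simp
    qed
    have J0leb: "J0 \<in> sets lebesgue" using J0b by simp
    have J0lm: "J0 \<in> lmeasurable"
      using bounded_subset[OF bddJ J0J] J0leb by (rule bounded_set_imp_lmeasurable)
    have Fint: "F integrable_on J0"
    proof (rule measurable_bounded_by_integrable_imp_integrable_real)
      show "F \<in> borel_measurable (lebesgue_on J0)"
        using Fm by (simp add: measurable_completion measurable_restrict_space1)
      show "(\<lambda>_. M) integrable_on J0" using J0lm by (rule integrable_on_const)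
      show "\<And>x. x \<in> J0 \<Longrightarrow> \<bar>F x\<bar> \<le> M" by (rule M)
      show "J0 \<in> sets lebesgue" by (rule J0leb)
    qed
    define I where "I = integral J0 F"
    have FI: "(F has_integral I) J0" using Fint unfolding I_def by (simp add: has_integral_integral)
    have IJ: "integral J f = I"
    proof -
      have "integral J f = integral J0 f"
        by (rule integral_spike_set) (use negfr frJ J0J in \<open>auto intro: negligible_subset\<close>)
      also have "\<dots> = integral J0 F" using FJ0 by (intro integral_cong) auto
      finally show ?thesis unfolding I_def .
    qed
    define r where "r = 1/(real CARD('n)+2) - 1/(q+real CARD('n)+1)"
    have phi: "((\<lambda>z. z^CARD('n) * (z - z powr q)) has_integral r) {0<..<1}"
      unfolding r_def using power_integral[OF assms(5), of "CARD('n)"] by (simp add: add.commute)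
    have homF: "F (z *\<^sub>R u) = z powr q * F u" if "0 < z" "z < 1" "u \<in> J0" for z u
    proof -
      have "F (z *\<^sub>R u) = f (z *\<^sub>R u)" using fF[of z "z *\<^sub>R u"] that by simp
      then show ?thesis using hom[of z u] that FJ0 by simp
    qed
    have FposJ0: "0 \<le> F u" if "u \<in> J0" for u using fpos[OF q1] J0J FJ0 that by auto
    have eD: "emeasure lborel Dset = ennreal (I * r)"
      unfolding Dset_def by (rule D_emeasure[OF Fm openJ0 assms(5) homF FposJ0 FI phi])
    have Ir: "0 \<le> I * r"
    proof -
      have "0 \<le> I" using has_integral_nonneg[OF FI] FposJ0 by blast
      moreover have "0 \<le> r" using has_integral_nonneg[OF phi] powr_le_one_le[of _ q] q1
        by (metis greaterThanLessThan_iff less_eq_real_def mult_nonneg_nonneg diff_ge_0_iff_ge zero_le_power)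
      ultimately show ?thesis by simp
    qed
    have "measure lebesgue N' - measure lebesgue S' = measure lborel N' - measure lborel S'"
      using N'm S'm by simp
    also have "\<dots> = measure lborel (N' - S')"
      using finN' N'm S'm S'N' by (simp add: measure_Diff)
    also have "\<dots> = I * r" using eD DN Ir by (simp add: measure_def)
    also have "\<dots> = (q - 1) / ((q + real CARD('n) + 1) * (real CARD('n) + 2)) * integral J f"
      unfolding IJ r_def using assms(5) by (simp add: field_simps)
    finally show ?thesis using measN measC by simp
  qed
  show ?thesis using goalJ unfolding J_def .
qed
end
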